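(* Let $F$, $H$, $X$, $\Omega$, $Q$ and the sequences generated by the IneIREG method be as described in the context, and suppose $H$ is $\mu$-strongly monotone for some $\mu>0$. Then for all $x\in X$ and $k\ge0$, $$\|w_k-x\|^2-\|x_{k+1}-x\|^2\ge(1-\lambda_k^2L_k^2)\|w_k-y_k\|^2+2\lambda_k\langle F(x),y_k-x\rangle+2\lambda_k\eta_k\langle H(x),y_k-x\rangle+2\lambda_k\eta_k\mu\|y_k-x\|^2,$$ where $L_k:=L_F+\eta_kL_H$.
   Context: Work in $\mathbb{R}^n$ with Euclidean inner product $\langle\cdot,\cdot\rangle$ and norm $\|\cdot\|$. The maps $F\colon \mathrm{Dom}\,F\to\mathbb{R}^n$ and $H\colon\mathrm{Dom}\,H\to\mathbb{R}^n$ are monotone and Lipschitz continuous with constants $L_F>0$ and $L_H>0$; $H$ is $\mu$-strongly monotone means $\langle H(x)-H(y),x-y\rangle\ge\mu\|x-y\|^2$ for all $x,y\in\mathrm{Dom}\,H$. $X$ is a nonempty compact convex set and $\Omega$ a nonempty closed convex set with $X\subset\Omega\subset\mathrm{Dom}\,F\cap\mathrm{Dom}\,H$; $P_X,P_\Omega$ denote orthogonal projections. $Q:=\{x\in X:\langle F(x),y-x\rangle\ge0\ \forall y\in X\}$ is assumed nonempty. IneIREG method: start with $x_0=x_{-1}\in X$; for $k=0,1,\dots$, with parameters $\alpha_k\ge0$, $\lambda_k>0$, $\eta_k>0$, set $w_k=x_k+\alpha_k(x_k-x_{k-1})$, $w'_k=P_\Omega(w_k)$, $y_k=P_X\big(w_k-\lambda_k(F(w'_k)+\eta_kH(w'_k))\big)$,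 $x_{k+1}=P_X\big(w_k-\lambda_k(F(y_k)+\eta_kH(y_k))\big)$. *)

theory Defs
  imports "HOL-Analysis.Analysis"
begin

definition monotone_op :: "'a::real_inner set \<Rightarrow> ('a \<Rightarrow> 'a) \<Rightarrow> bool" where
  "monotone_op D T \<longleftrightarrow> (\<forall>x\<in>D. \<forall>y\<in>D. inner (T x - T y) (x - y) \<ge> 0)"

definition strongly_monotone_op :: "real \<Rightarrow> 'a::real_inner set \<Rightarrow> ('a \<Rightarrow> 'a) \<Rightarrow> bool" where
  "strongly_monotone_op \<mu> D T \<longleftrightarrow>
     (\<forall>x\<in>D. \<forall>y\<in>D. inner (T x - T y) (x - y) \<ge> \<mu> * (norm (x - y))\<^sup>2)"

abbreviation proj :: "'a::euclidean_space set \<Rightarrow> 'a \<Rightarrow> 'a" where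
  "proj S z \<equiv> closest_point S z"

text \<open>Sequences generated by IneIREG: x_0 = x_{-1} in X; xm k stands for x_{k-1},
  i.e. the inertial term uses x (k-1) for k>=1 and x 0 for k = 0.\<close>
definition ineireg ::
  "('a::euclidean_space \<Rightarrow> 'a) \<Rightarrow> ('a \<Rightarrow> 'a) \<Rightarrow> 'a set \<Rightarrow> 'a set \<Rightarrow>
   (nat \<Rightarrow> real) \<Rightarrow> (nat \<Rightarrow> real) \<Rightarrow> (nat \<Rightarrow> real) \<Rightarrow>
   (nat \<Rightarrow> 'a) \<Rightarrow> (nat \<Rightarrow> 'a) \<Rightarrow> (nat \<Rightarrow> 'a) \<Rightarrow> (nat \<Rightarrow> 'a) \<Rightarrow> bool" where
  "ineireg F H X \<Omega> \<alpha> lam \<eta> x w w' y \<longleftrightarrow>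
     x 0 \<in> X \<and>
     (\<forall>k. w k = x k + \<alpha> k *\<^sub>R (x k - (if k = 0 then x 0 else x (k - 1))) \<and>
          w' k = proj \<Omega> (w k) \<and>
          y k = proj X (w k - lam k *\<^sub>R (F (w' k) + \<eta> k *\<^sub>R H (w' k))) \<and>
          x (Suc k) = proj X (w k - lam k *\<^sub>R (F (y k) + \<eta> k *\<^sub>R H (y k))))"

end

theory Submission
  imports Defs
begin

lemma eg_core:
  fixes a b c gy gw :: "'a::real_inner" and lam L :: real
  assumes h1: "inner (a - b - lam *\<^sub>R gy) (b + c) \<ge> 0"
    and h2: "inner (a - lam *\<^sub>R gw) b \<le> 0"
    and h3: "norm (gw - gy) \<le> L * norm a" and lp: "lam > 0"
  shows "(norm (a + c))\<^sup>2 - (norm (b + c))\<^sup>2 \<ge> (1 - lam\<^sup>2 * L\<^sup>2) * (norm a)\<^sup>2 + 2 * lam * inner gy c"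
proof -
  have e1: "inner a b + inner a c - (norm b)\<^sup>2 - inner b c - lam * inner gy b - lam * inner gy c \<ge> 0"
    using h1 by (simp add: inner_simps inner_commute power2_norm_eq_inner algebra_simps)
  have e2: "inner a b \<le> lam * inner gw b" using h2 by (simp add: inner_simps)
  have l: "(norm (a + c))\<^sup>2 - (norm (b + c))\<^sup>2 = (norm a)\<^sup>2 + 2 * inner a c - (norm b)\<^sup>2 - 2 * inner b c"
    by (simp add: power2_norm_eq_inner inner_simps inner_commute)
  have cs: "inner (gw - gy) b \<le> L * norm a * norm b"
    using Cauchy_Schwarz_ineq2[of "gw - gy" b] h3 norm_ge_zero[of b]
  proof -
    have "norm (gw - gy) * norm b \<le> L * norm a * norm b" using h3 by (simp add: mult_right_mono)
    thus ?thesis using Cauchy_Schwarz_ineq2[of "gw - gy" b] by linarith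
  qed
  have cs2: "inner gw b - inner gy b \<le> L * norm a * norm b" using cs by (simp add: inner_simps)
  have sq: "(norm b)\<^sup>2 - 2 * lam * (L * norm a * norm b) + lam\<^sup>2 * L\<^sup>2 * (norm a)\<^sup>2 \<ge> 0"
  proof -
    have "(norm b - lam * L * norm a)\<^sup>2 \<ge> 0" by simp
    thus ?thesis by (simp add: power2_eq_square algebra_simps)
  qed
  have "lam * (inner gw b - inner gy b) \<le> lam * (L * norm a * norm b)"
    using cs2 lp by (simp add: mult_left_mono)
  thus ?thesis using e1 e2 l sq by (simp add: algebra_simps)
qed

theorem proposition4p2:
  fixes F H :: "'a::euclidean_space \<Rightarrow> 'a"
    and DF DH X \<Omega> :: "'a set"
    and LF LH \<mu> :: real
    and \<alpha> lam \<eta> :: "nat \<Rightarrow> real"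
    and x w w' y :: "nat \<Rightarrow> 'a"
  assumes F_mono: "monotone_op DF F" and F_lip: "LF-lipschitz_on DF F" and LF_pos: "LF > 0"
    and H_mono: "monotone_op DH H" and H_lip: "LH-lipschitz_on DH H" and LH_pos: "LH > 0"
    and H_strong: "strongly_monotone_op \<mu> DH H" and mu_pos: "\<mu> > 0"
    and X_ne: "X \<noteq> {}" and X_compact: "compact X" and X_convex: "convex X"
    and Om_ne: "\<Omega> \<noteq> {}" and Om_closed: "closed \<Omega>" and Om_convex: "convex \<Omega>"
    and X_sub: "X \<subseteq> \<Omega>" and Om_sub: "\<Omega> \<subseteq> DF \<inter> DH"
    and Q_ne: "{z \<in> X. \<forall>v\<in>X. inner (F z) (v - z) \<ge> 0} \<noteq> {}"
    and alpha_nn: "\<forall>k. \<alpha> k \<ge> 0" and lambda_pos: "\<forall>k. lam k > 0" and eta_pos: "\<forall>k. \<eta> k > 0"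
    and iter: "ineireg F H X \<Omega> \<alpha> lam \<eta> x w w' y"
  shows "\<forall>z\<in>X. \<forall>k.
    (norm (w k - z))\<^sup>2 - (norm (x (Suc k) - z))\<^sup>2 \<ge>
      (1 - (lam k)\<^sup>2 * (LF + \<eta> k * LH)\<^sup>2) * (norm (w k - y k))\<^sup>2
      + 2 * lam k * inner (F z) (y k - z)
      + 2 * lam k * \<eta> k * inner (H z) (y k - z)
      + 2 * lam k * \<eta> k * \<mu> * (norm (y k - z))\<^sup>2"
proof (intro ballI allI)
  fix z k assume zX: "z \<in> X"
  have Xcl: "closed X" using X_compact compact_imp_closed by blast
  define G where "G = (\<lambda>p. F p + \<eta> k *\<^sub>R H p)"
  define L where "L = LF + \<eta> k * LH"
  have it: "w' k = proj \<Omega> (w k)" "y k = proj X (w k - lam k *\<^sub>R G (w' k))"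
    "x (Suc k) = proj X (w k - lam k *\<^sub>R G (y k))"
    using iter unfolding ineireg_def G_def by auto
  have yX: "y k \<in> X" using it(2) closest_point_in_set[OF Xcl X_ne] by simp
  have xX: "x (Suc k) \<in> X" using it(3) closest_point_in_set[OF Xcl X_ne] by simp
  have wO: "w' k \<in> \<Omega>" using it(1) closest_point_in_set[OF Om_closed Om_ne] by simp
  have yO: "y k \<in> \<Omega>" using yX X_sub by auto
  have dwy: "dist (w' k) (y k) \<le> dist (w k) (y k)"
    using closest_point_lipschitz[OF Om_convex Om_closed Om_ne, of "w k" "y k"]
      closest_point_self[OF yO] it(1) by simp
  have eta: "\<eta> k > 0" using eta_pos by auto
  have lp: "lam k > 0" using lambda_pos by auto
  have fl: "dist (F (w' k)) (F (y k)) \<le> LF * dist (w' k) (y k)"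
    using lipschitz_onD[OF F_lip] wO yO Om_sub by blast
  have hl: "dist (H (w' k)) (H (y k)) \<le> LH * dist (w' k) (y k)"
    using lipschitz_onD[OF H_lip] wO yO Om_sub by blast
  have "norm (G (w' k) - G (y k)) = norm ((F (w' k) - F (y k)) + \<eta> k *\<^sub>R (H (w' k) - H (y k)))"
    unfolding G_def by (simp add: algebra_simps)
  also have "\<dots> \<le> norm (F (w' k) - F (y k)) + \<eta> k * norm (H (w' k) - H (y k))"
    using norm_triangle_ineq eta by (metis abs_of_pos norm_scaleR)
  also have "\<dots> \<le> LF * dist (w' k) (y k) + \<eta> k * (LH * dist (w' k) (y k))"
    using fl hl eta by (simp add: dist_norm add_mono mult_left_mono)
  also have "\<dots> = L * dist (w' k) (y k)" unfolding L_def by (simp add: algebra_simps)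
  also have "\<dots> \<le> L * dist (w k) (y k)"
    using dwy LF_pos LH_pos eta unfolding L_def by (intro mult_left_mono) auto
  finally have h3: "norm (G (w' k) - G (y k)) \<le> L * norm (w k - y k)" by (simp add: dist_norm)
  have d1: "inner ((w k - lam k *\<^sub>R G (y k)) - x (Suc k)) (z - x (Suc k)) \<le> 0"
    using closest_point_dot[OF X_convex Xcl zX, of "w k - lam k *\<^sub>R G (y k)"] it(3) by simp
  have h1: "inner ((w k - y k) - (x (Suc k) - y k) - lam k *\<^sub>R G (y k)) ((x (Suc k) - y k) + (y k - z)) \<ge> 0"
  proof -
    have "inner ((w k - lam k *\<^sub>R G (y k)) - x (Suc k)) (x (Suc k) - z) \<ge> 0"
      using d1 by (metis inner_minus_right minus_diff_eq neg_0_le_iff_le)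
    thus ?thesis by (simp add: algebra_simps)
  qed
  have d2: "inner ((w k - lam k *\<^sub>R G (w' k)) - y k) (x (Suc k) - y k) \<le> 0"
    using closest_point_dot[OF X_convex Xcl xX, of "w k - lam k *\<^sub>R G (w' k)"] it(2) by simp
  have h2: "inner ((w k - y k) - lam k *\<^sub>R G (w' k)) (x (Suc k) - y k) \<le> 0"
    using d2 by (simp add: algebra_simps)
  have core: "(norm ((w k - y k) + (y k - z)))\<^sup>2 - (norm ((x (Suc k) - y k) + (y k - z)))\<^sup>2
     \<ge> (1 - (lam k)\<^sup>2 * L\<^sup>2) * (norm (w k - y k))\<^sup>2 + 2 * lam k * inner (G (y k)) (y k - z)"
    by (rule eg_core[OF h1 h2 h3 lp])
  have zD: "z \<in> DF" "z \<in> DH" "y k \<in> DF" "y k \<in> DH" using zX yX X_sub Om_sub by auto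
  have mF: "inner (F (y k) - F z) (y k - z) \<ge> 0" using F_mono zD unfolding monotone_op_def by blast
  have mH: "inner (H (y k) - H z) (y k - z) \<ge> \<mu> * (norm (y k - z))\<^sup>2"
    using H_strong zD unfolding strongly_monotone_op_def by blast
  have gexp: "inner (G (y k)) (y k - z) = inner (F (y k)) (y k - z) + \<eta> k * inner (H (y k)) (y k - z)"
    unfolding G_def by (simp add: inner_add_left)
  have mF': "inner (F (y k)) (y k - z) \<ge> inner (F z) (y k - z)" using mF by (simp add: inner_diff_left)
  have mH': "inner (H (y k)) (y k - z) \<ge> inner (H z) (y k - z) + \<mu> * (norm (y k - z))\<^sup>2"
    using mH by (simp add: inner_diff_left)
  have "2 * lam k * inner (G (y k)) (y k - z) \<ge> 2 * lam k * inner (F z) (y k - z)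
      + 2 * lam k * \<eta> k * inner (H z) (y k - z) + 2 * lam k * \<eta> k * \<mu> * (norm (y k - z))\<^sup>2"
  proof -
    have a: "2 * lam k * inner (F (y k)) (y k - z) \<ge> 2 * lam k * inner (F z) (y k - z)"
      using mF' lp by simp
    have b: "2 * lam k * \<eta> k * inner (H (y k)) (y k - z) \<ge> 2 * lam k * \<eta> k * (inner (H z) (y k - z) + \<mu> * (norm (y k - z))\<^sup>2)"
      using mH' lp eta by (intro mult_left_mono) auto
    have c: "2 * lam k * inner (G (y k)) (y k - z) = 2 * lam k * inner (F (y k)) (y k - z) + 2 * lam k * \<eta> k * inner (H (y k)) (y k - z)"
      unfolding gexp by (simp only: distrib_left mult.assoc)
    have b': "2 * lam k * \<eta> k * (inner (H z) (y k - z) + \<mu> * (norm (y k - z))\<^sup>2) = 2 * lam k * \<eta> k * inner (H z) (y k - z) + 2 * lam k * \<eta> k * \<mu> * (norm (y k - z))\<^sup>2"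
      by (simp only: distrib_left mult.assoc)
    show ?thesis using a b b' c by linarith
  qed
  thus "(norm (w k - z))\<^sup>2 - (norm (x (Suc k) - z))\<^sup>2 \<ge>
      (1 - (lam k)\<^sup>2 * (LF + \<eta> k * LH)\<^sup>2) * (norm (w k - y k))\<^sup>2
      + 2 * lam k * inner (F z) (y k - z)
      + 2 * lam k * \<eta> k * inner (H z) (y k - z)
      + 2 * lam k * \<eta> k * \<mu> * (norm (y k - z))\<^sup>2"
    using core unfolding L_def by simp
qed

end
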